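(* For all real $\varepsilon\ge0$: $\mathsf{PC}_\mathbb{R}\equiv_W\mathsf{P}_{>\varepsilon}\mathsf{C}_\mathbb{R}$, where $\mathbb R$ carries Lebesgue measure.
   Context: A represented space is a pair $(X,\delta_X)$ with $\delta_X:\subseteq\mathbb{N}^\mathbb{N}\to X$ a partial surjection; $\mathbb R$ carries its Cauchy representation. A realizer of $f:\subseteq X\rightrightarrows Y$ is a partial $F$ with $\delta_Y F(p)\in f(\delta_X(p))$ for all $p\in\mathrm{dom}(f\circ\delta_X)$. $f\le_W g$ if there are computable partial $H,K:\subseteq\mathbb{N}^\mathbb{N}\to\mathbb{N}^\mathbb{N}$ such that $p\mapsto H\langle p,GK(p)\rangle$ realizes $f$ for every realizer $G$ of $g$; $\equiv_W$ is the induced equivalence. $\mathcal{A}_-(\mathbb R)$ denotes the closed subsets of $\mathbb R$ represented by negative information (a name of $A$ enumerates rational open intervals whose union is $\mathbb R\setminus A$). For $\varepsilon\in\mathbb R$, $\mathsf{P}_{>\varepsilon}\mathsf{C}_\mathbb R:\subseteq\mathcal A_-(\mathbb R)\rightrightarrows\mathbb R$, $A\mapsto A$, is defined on closed $A$ with Lebesgue measure $\lambda(A)>\varepsilon$, and $\mathsf{PC}_\mathbb R:=\mathsf P_{>0}\mathsf C_\mathbb R$. *)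

theory Defs
  imports "HOL-Analysis.Analysis" "HOL-Library.Nat_Bijection"
begin

datatype recf = Zero | Succ | Proj nat | Comp recf "recf list" | PrimRec recf recf | Mu recf

inductive eval :: "recf \<Rightarrow> nat list \<Rightarrow> nat \<Rightarrow> bool" where
  eval_Zero: "eval Zero xs 0"
| eval_Succ: "eval Succ (x # xs) (Suc x)"
| eval_Proj: "i < length xs \<Longrightarrow> eval (Proj i) xs (xs ! i)"
| eval_Comp: "length ys = length gs \<Longrightarrow> (\<forall>i<length gs. eval (gs ! i) xs (ys ! i))
     \<Longrightarrow> eval f ys z \<Longrightarrow> eval (Comp f gs) xs z"
| eval_PrimRec0: "eval f xs z \<Longrightarrow> eval (PrimRec f g) (0 # xs) z"
| eval_PrimRecS: "eval (PrimRec f g) (n # xs) y \<Longrightarrow> eval g (y # n # xs) z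
     \<Longrightarrow> eval (PrimRec f g) (Suc n # xs) z"
| eval_Mu: "eval f (n # xs) 0 \<Longrightarrow> (\<forall>m<n. \<exists>y. eval f (m # xs) (Suc y))
     \<Longrightarrow> eval (Mu f) xs n"

type_synonym baire = "nat \<Rightarrow> nat"

text \<open>Type-2 computation via a partial recursive code e: the n-th output digit is
  q n iff, scanning prefixes of p of increasing length k, e answers 0 ("need more input")
  on all shorter prefixes and Suc (q n) on the prefix of length k.\<close>
definition prefix_code :: "baire \<Rightarrow> nat \<Rightarrow> nat" where
  "prefix_code p k = list_encode (map p [0..<k])"

definition computes :: "recf \<Rightarrow> baire \<Rightarrow> baire \<Rightarrow> bool" where
  "computes e p q \<longleftrightarrow> (\<forall>n. \<exists>k. eval e [n, prefix_code p k] (Suc (q n))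
       \<and> (\<forall>j<k. eval e [n, prefix_code p j] 0))"

definition comp_fun :: "recf \<Rightarrow> baire \<Rightarrow> baire option" where
  "comp_fun e p = (if \<exists>q. computes e p q then Some (THE q. computes e p q) else None)"

definition pairB :: "baire \<Rightarrow> baire \<Rightarrow> baire" where
  "pairB p q n = (if even n then p (n div 2) else q (n div 2))"

text \<open>A problem f :: 'a \<Rightarrow> 'b set; its domain is {x. f x \<noteq> {}}.
  A representation is a partial map baire \<Rightarrow> 'a option.\<close>

definition realizer :: "(baire \<Rightarrow> 'a option) \<Rightarrow> (baire \<Rightarrow> 'b option) \<Rightarrow> ('a \<Rightarrow> 'b set)
    \<Rightarrow> (baire \<Rightarrow> baire option) \<Rightarrow> bool" where
  "realizer \<delta>X \<delta>Y f F \<longleftrightarrow> (\<forall>p x. \<delta>X p = Some x \<and> f x \<noteq> {} \<longrightarrow>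
      (\<exists>q y. F p = Some q \<and> \<delta>Y q = Some y \<and> y \<in> f x))"

definition weihrauch_le ::
  "(baire \<Rightarrow> 'a option) \<Rightarrow> (baire \<Rightarrow> 'b option) \<Rightarrow> ('a \<Rightarrow> 'b set) \<Rightarrow>
   (baire \<Rightarrow> 'c option) \<Rightarrow> (baire \<Rightarrow> 'd option) \<Rightarrow> ('c \<Rightarrow> 'd set) \<Rightarrow> bool" where
  "weihrauch_le \<delta>X \<delta>Y f \<delta>Z \<delta>W g \<longleftrightarrow> (\<exists>eH eK. \<forall>G. realizer \<delta>Z \<delta>W g G \<longrightarrow>
      realizer \<delta>X \<delta>Y f (\<lambda>p. case comp_fun eK p of None \<Rightarrow> None
                               | Some k \<Rightarrow> (case G k of None \<Rightarrow> None
                                           | Some r \<Rightarrow> comp_fun eH (pairB p r))))"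

definition weihrauch_eq ::
  "(baire \<Rightarrow> 'a option) \<Rightarrow> (baire \<Rightarrow> 'b option) \<Rightarrow> ('a \<Rightarrow> 'b set) \<Rightarrow>
   (baire \<Rightarrow> 'c option) \<Rightarrow> (baire \<Rightarrow> 'd option) \<Rightarrow> ('c \<Rightarrow> 'd set) \<Rightarrow> bool" where
  "weihrauch_eq \<delta>X \<delta>Y f \<delta>Z \<delta>W g \<longleftrightarrow>
     weihrauch_le \<delta>X \<delta>Y f \<delta>Z \<delta>W g \<and> weihrauch_le \<delta>Z \<delta>W g \<delta>X \<delta>Y f"

definition rat_dec :: "nat \<Rightarrow> real" where
  "rat_dec n = (case prod_decode n of (a, b) \<Rightarrow> real_of_int (int_decode a) / real (Suc b))"

definition delta_R :: "baire \<Rightarrow> real option" where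
  "delta_R p = (if \<exists>x. \<forall>n. \<bar>rat_dec (p n) - x\<bar> \<le> (1/2) ^ n
                then Some (THE x. \<forall>n. \<bar>rat_dec (p n) - x\<bar> \<le> (1/2) ^ n) else None)"

definition interval_dec :: "nat \<Rightarrow> real set" where
  "interval_dec k = (case prod_decode k of (a, b) \<Rightarrow> {rat_dec a <..< rat_dec b})"

text \<open>Negative information: p n = 0 enumerates nothing, p n = Suc k enumerates interval k;
  the named set is the complement of the union of the enumerated intervals.\<close>
definition delta_A :: "baire \<Rightarrow> real set option" where
  "delta_A p = Some (- (\<Union>n\<in>{n. p n \<noteq> 0}. interval_dec (p n - 1)))"

definition P_gt_C_R :: "real \<Rightarrow> real set \<Rightarrow> real set" where
  "P_gt_C_R \<epsilon> A = (if closed A \<and> emeasure lborel A > ennreal \<epsilon> then A else {})"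

definition PC_R :: "real set \<Rightarrow> real set" where
  "PC_R = P_gt_C_R 0"

end

theory Submission
  imports Defs
begin


lemma eval_det: "eval e xs y \<Longrightarrow> eval e xs z \<Longrightarrow> y = z"
proof (induction arbitrary: z rule: eval.induct)
  case (eval_Zero xs) from eval_Zero.prems show ?case by (cases rule: eval.cases) (use eval_Zero in auto)
next
  case (eval_Succ x xs) from eval_Succ.prems show ?case by (cases rule: eval.cases) (use eval_Succ in auto)
next
  case (eval_Proj i xs) from eval_Proj.prems show ?case by (cases rule: eval.cases) (use eval_Proj in auto)
next
  case (eval_Comp ys gs xs f z z')
  from eval_Comp.prems show ?case
  proof (cases rule: eval.cases)
    case (eval_Comp ys')
    have "ys' = ys"
    proof (rule nth_equalityI)
      show "length ys' = length ys" using eval_Comp eval_Comp.hyps by simp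
      fix i assume "i < length ys'"
      then show "ys' ! i = ys ! i" using eval_Comp eval_Comp.hyps eval_Comp.IH by auto
    qed
    then show ?thesis using eval_Comp eval_Comp.IH by auto
  qed
next
  case (eval_PrimRec0 f xs z g) from eval_PrimRec0.prems show ?case by (cases rule: eval.cases) (use eval_PrimRec0 in auto)
next
  case (eval_PrimRecS f g n xs y z) 
  from eval_PrimRecS.prems show ?case
    by (cases rule: eval.cases) (use eval_PrimRecS.IH in auto)
next
  case (eval_Mu f n xs)
  from eval_Mu.prems show ?case
  proof (cases rule: eval.cases)
    case eval_Mu
    show ?thesis
    proof (rule ccontr)
      assume "n \<noteq> z"
      then consider "n < z" | "z < n" by linarith
      then show False
      proof cases
        case 1 then obtain y where "eval f (n # xs) (Suc y)" using eval_Mu(2) by blast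
        then show False using eval_Mu.IH(1) by fastforce
      next
        case 2 then obtain y where "eval f (z # xs) (Suc y)" "\<forall>w. eval f (z # xs) w \<longrightarrow> Suc y = w"
          using eval_Mu.IH(2) by blast
        then show False using eval_Mu(1) by fastforce
      qed
    qed
  qed
qed

definition rf :: "nat \<Rightarrow> (nat list \<Rightarrow> nat) \<Rightarrow> bool" where
  "rf n f \<longleftrightarrow> (\<exists>e. \<forall>xs. length xs = n \<longrightarrow> eval e xs (f xs))"

lemma rf_cong: "rf n f \<Longrightarrow> (\<And>xs. length xs = n \<Longrightarrow> f xs = g xs) \<Longrightarrow> rf n g"
  unfolding rf_def by metis

lemma rf_zero: "rf n (\<lambda>_. 0)"
  unfolding rf_def by (auto intro: eval_Zero)

lemma rf_proj: "i < n \<Longrightarrow> rf n (\<lambda>xs. xs ! i)"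
  unfolding rf_def by (auto intro: eval_Proj)

lemma rf_comp_list:
  assumes "rf m g" "length hs = m" "\<forall>h\<in>set hs. rf n h"
  shows "rf n (\<lambda>xs. g (map (\<lambda>h. h xs) hs))"
proof -
  obtain eg where eg: "\<forall>xs. length xs = m \<longrightarrow> eval eg xs (g xs)" using assms(1) rf_def by auto
  have "\<exists>es. length es = length hs \<and> (\<forall>i<length hs. \<forall>xs. length xs = n \<longrightarrow> eval (es!i) xs ((hs!i) xs))"
    using assms(3)
  proof (induction hs)
    case Nil then show ?case by auto
  next
    case (Cons h hs)
    then obtain es where es: "length es = length hs" "\<forall>i<length hs. \<forall>xs. length xs = n \<longrightarrow> eval (es!i) xs ((hs!i) xs)" by auto
    obtain e where e: "\<forall>xs. length xs = n \<longrightarrow> eval e xs (h xs)" using Cons.prems rf_def by auto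
    show ?case by (rule exI[of _ "e#es"]) (use es e in \<open>auto simp: nth_Cons split: nat.split\<close>)
  qed
  then obtain es where es: "length es = length hs" "\<forall>i<length hs. \<forall>xs. length xs = n \<longrightarrow> eval (es!i) xs ((hs!i) xs)" by auto
  show ?thesis unfolding rf_def
  proof (intro exI[of _ "Comp eg es"] allI impI)
    fix xs :: "nat list" assume "length xs = n"
    then show "eval (Comp eg es) xs (g (map (\<lambda>h. h xs) hs))"
      by (intro eval_Comp[where ys="map (\<lambda>h. h xs) hs"]) (use es eg assms(2) in auto)
  qed
qed

lemma rf_comp1: "rf 1 (\<lambda>xs. g (xs!0)) \<Longrightarrow> rf n f1 \<Longrightarrow> rf n (\<lambda>xs. g (f1 xs))"
  using rf_comp_list[of 1 "\<lambda>xs. g (xs!0)" "[f1]" n] by simp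

lemma rf_comp2: "rf 2 (\<lambda>xs. g (xs!0) (xs!1)) \<Longrightarrow> rf n f1 \<Longrightarrow> rf n f2 \<Longrightarrow> rf n (\<lambda>xs. g (f1 xs) (f2 xs))"
  using rf_comp_list[of 2 "\<lambda>xs. g (xs!0) (xs!1)" "[f1,f2]" n] by simp

lemma rf_comp3: "rf 3 (\<lambda>xs. g (xs!0) (xs!1) (xs!2)) \<Longrightarrow> rf n f1 \<Longrightarrow> rf n f2 \<Longrightarrow> rf n f3 \<Longrightarrow>
   rf n (\<lambda>xs. g (f1 xs) (f2 xs) (f3 xs))"
  using rf_comp_list[of 3 "\<lambda>xs. g (xs!0) (xs!1) (xs!2)" "[f1,f2,f3]" n] by simp

lemma rf_suc: "rf n f \<Longrightarrow> rf n (\<lambda>xs. Suc (f xs))"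
proof -
  have "rf 1 (\<lambda>xs. Suc (xs!0))" unfolding rf_def
    by (rule exI[of _ Succ]) (auto simp: length_Suc_conv intro: eval_Succ)
  then show "rf n f \<Longrightarrow> rf n (\<lambda>xs. Suc (f xs))" by (rule rf_comp1)
qed

lemma rf_const: "rf n (\<lambda>_. c)"
  by (induction c) (auto intro: rf_zero rf_suc)

lemma rf_prim:
  assumes "rf n f" "rf (Suc (Suc n)) g"
  shows "rf (Suc n) (\<lambda>xs. rec_nat (f (tl xs)) (\<lambda>i y. g (y # i # tl xs)) (hd xs))"
proof -
  obtain ef where ef: "\<forall>xs. length xs = n \<longrightarrow> eval ef xs (f xs)" using assms(1) rf_def by auto
  obtain eg where eg: "\<forall>xs. length xs = Suc (Suc n) \<longrightarrow> eval eg xs (g xs)" using assms(2) rf_def by auto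
  have *: "eval (PrimRec ef eg) (i # xs) (rec_nat (f xs) (\<lambda>i y. g (y # i # xs)) i)" if l: "length xs = n" for i xs
  proof (induction i)
    case 0 show ?case using ef l by (simp add: eval_PrimRec0)
  next
    case (Suc i)
    have "eval eg (rec_nat (f xs) (\<lambda>i y. g (y # i # xs)) i # i # xs) (g (rec_nat (f xs) (\<lambda>i y. g (y # i # xs)) i # i # xs))"
      using eg l by simp
    from eval_PrimRecS[OF Suc this] show ?case by simp
  qed
  show ?thesis unfolding rf_def
  proof (intro exI[of _ "PrimRec ef eg"] allI impI)
    fix xs :: "nat list" assume "length xs = Suc n"
    then obtain i ys where "xs = i # ys" "length ys = n" by (cases xs) auto
    then show "eval (PrimRec ef eg) xs (rec_nat (f (tl xs)) (\<lambda>i y. g (y # i # tl xs)) (hd xs))"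
      using * by simp
  qed
qed

lemma rf_mu:
  assumes "rf (Suc n) g" "\<And>xs. length xs = n \<Longrightarrow> \<exists>m. g (m # xs) = 0"
  shows "rf n (\<lambda>xs. LEAST m. g (m # xs) = 0)"
proof -
  obtain e where e: "\<forall>xs. length xs = Suc n \<longrightarrow> eval e xs (g xs)" using assms(1) rf_def by auto
  show ?thesis unfolding rf_def
  proof (intro exI[of _ "Mu e"] allI impI)
    fix xs :: "nat list" assume l: "length xs = n"
    let ?m = "LEAST m. g (m # xs) = 0"
    obtain m0 where "g (m0 # xs) = 0" using assms(2)[OF l] by blast
    then have z: "g (?m # xs) = 0" by (rule LeastI)
    have nz: "\<forall>m<?m. \<exists>y. eval e (m # xs) (Suc y)"
    proof (intro allI impI)
      fix m assume "m < ?m"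
      then have "g (m # xs) \<noteq> 0" using not_less_Least by blast
      then obtain y where y: "g (m#xs) = Suc y" using not0_implies_Suc by blast
      have "eval e (m # xs) (g (m # xs))" using e l by simp
      then show "\<exists>y. eval e (m # xs) (Suc y)" using y by auto
    qed
    have "eval e (?m # xs) 0" using e l z by (metis length_Cons)
    from eval_Mu[OF this nz] show "eval (Mu e) xs ?m" .
  qed
qed



named_theorems rfI

lemma rf_cong': "rf m f \<Longrightarrow> m = n \<Longrightarrow> (\<And>xs. length xs = n \<Longrightarrow> f xs = g xs) \<Longrightarrow> rf n g"
  using rf_cong by blast

lemma rf_proj_I [rfI]: "i < n \<Longrightarrow> rf n (\<lambda>xs. xs ! i)" by (rule rf_proj)
lemma rf_const_I [rfI]: "rf n (\<lambda>_. c)" by (rule rf_const)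
lemma rf_suc_I [rfI]: "rf n f \<Longrightarrow> rf n (\<lambda>xs. Suc (f xs))" by (rule rf_suc)

lemma rec_add: "rec_nat b (\<lambda>i y. Suc y) a = a + b" by (induction a) auto
lemma rec_mult: "rec_nat 0 (\<lambda>i y. y + b) a = a * b" by (induction a) auto
lemma rec_pred: "rec_nat 0 (\<lambda>i y. i) a = a - 1" by (induction a) auto
lemma rec_minus: "rec_nat a (\<lambda>i y. y - Suc 0) b = a - b" by (induction b) auto
lemma rec_cond: "rec_nat t (\<lambda>i y. e) c = (if c = 0 then t else e)" by (cases c) auto

lemma rf_add2: "rf 2 (\<lambda>xs. xs!0 + xs!1)"
proof -
  have "rf (Suc 1) (\<lambda>xs. rec_nat ((\<lambda>ys. ys!0) (tl xs)) (\<lambda>i y. (\<lambda>ys. Suc (ys!0)) (y # i # tl xs)) (hd xs))"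
    by (rule rf_prim) (intro rfI | simp)+
  then show ?thesis by (rule rf_cong') (auto simp: numeral_2_eq_2 numeral_3_eq_3 rec_add length_Suc_conv)
qed

lemma rf_add_I [rfI]: "rf n f \<Longrightarrow> rf n g \<Longrightarrow> rf n (\<lambda>xs. f xs + g xs)"
  using rf_comp2[OF rf_add2] .

lemma rf_mult2: "rf 2 (\<lambda>xs. xs!0 * xs!1)"
proof -
  have "rf (Suc 1) (\<lambda>xs. rec_nat ((\<lambda>ys. 0) (tl xs)) (\<lambda>i y. (\<lambda>ys. ys!0 + ys!2) (y # i # tl xs)) (hd xs))"
    by (rule rf_prim) (intro rfI | simp)+
  then show ?thesis by (rule rf_cong') (auto simp: numeral_2_eq_2 numeral_3_eq_3 rec_mult length_Suc_conv)
qed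

lemma rf_mult_I [rfI]: "rf n f \<Longrightarrow> rf n g \<Longrightarrow> rf n (\<lambda>xs. f xs * g xs)"
  using rf_comp2[OF rf_mult2] .

lemma rf_pred1: "rf 1 (\<lambda>xs. xs!0 - 1)"
proof -
  have "rf (Suc 0) (\<lambda>xs. rec_nat ((\<lambda>ys. 0) (tl xs)) (\<lambda>i y. (\<lambda>ys. ys!1) (y # i # tl xs)) (hd xs))"
    by (rule rf_prim) (intro rfI | simp)+
  then show ?thesis by (rule rf_cong') (auto simp: numeral_2_eq_2 numeral_3_eq_3 rec_pred length_Suc_conv)
qed

lemma rf_pred_I: "rf n f \<Longrightarrow> rf n (\<lambda>xs. f xs - 1)"
  using rf_comp1[OF rf_pred1] .

lemma rf_minus_rev: "rf 2 (\<lambda>xs. xs!1 - xs!0)"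
proof -
  have "rf (Suc 1) (\<lambda>xs. rec_nat ((\<lambda>ys. ys!0) (tl xs)) (\<lambda>i y. (\<lambda>ys. ys!0 - 1) (y # i # tl xs)) (hd xs))"
    by (rule rf_prim) (intro rfI rf_pred_I | simp)+
  then show ?thesis by (rule rf_cong') (auto simp: numeral_2_eq_2 numeral_3_eq_3 rec_minus length_Suc_conv)
qed

lemma rf_minus_I [rfI]: "rf n f \<Longrightarrow> rf n g \<Longrightarrow> rf n (\<lambda>xs. f xs - g xs)"
proof -
  assume "rf n f" "rf n g"
  from rf_comp2[OF rf_minus_rev this(2) this(1)] show ?thesis by simp
qed

lemma rf_cond3: "rf 3 (\<lambda>xs. if xs!0 = 0 then xs!1 else xs!2)"
proof -
  have "rf (Suc 2) (\<lambda>xs. rec_nat ((\<lambda>ys. ys!0) (tl xs)) (\<lambda>i y. (\<lambda>ys. ys!3) (y # i # tl xs)) (hd xs))"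
    by (rule rf_prim) (intro rfI | simp)+
  then show ?thesis by (rule rf_cong') (auto simp: numeral_2_eq_2 numeral_3_eq_3 rec_cond length_Suc_conv)
qed

lemma rf_cond_I: "rf n c \<Longrightarrow> rf n f \<Longrightarrow> rf n g \<Longrightarrow> rf n (\<lambda>xs. if c xs = 0 then f xs else g xs)"
  using rf_comp3[OF rf_cond3] .

lemma rf_if_le_I [rfI]: "rf n a \<Longrightarrow> rf n b \<Longrightarrow> rf n f \<Longrightarrow> rf n g \<Longrightarrow> rf n (\<lambda>xs. if a xs \<le> b xs then f xs else g xs)"
proof -
  assume "rf n a" "rf n b" "rf n f" "rf n g"
  then have "rf n (\<lambda>xs. if a xs - b xs = 0 then f xs else g xs)" by (intro rf_cond_I rf_minus_I)
  then show ?thesis by (rule rf_cong) auto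
qed

lemma rf_if_less_I [rfI]: "rf n a \<Longrightarrow> rf n b \<Longrightarrow> rf n f \<Longrightarrow> rf n g \<Longrightarrow> rf n (\<lambda>xs. if a xs < b xs then f xs else g xs)"
proof -
  assume "rf n a" "rf n b" "rf n f" "rf n g"
  then have "rf n (\<lambda>xs. if b xs \<le> a xs then g xs else f xs)" by (intro rfI)
  then show ?thesis by (rule rf_cong) auto
qed

lemma rf_div2_1: "rf 1 (\<lambda>xs. xs!0 div 2)"
proof -
  let ?g = "\<lambda>ys. if ys!1 < 2 * ys!0 + 2 then 0 else (1::nat)"
  have A: "rf (Suc 1) ?g" by (intro rfI | simp)+
  have B: "\<exists>m. ?g (m # xs) = 0" if "length xs = 1" for xs :: "nat list"
    by (rule exI[of _ "xs!0"]) auto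
  have C: "(LEAST m. ?g (m # xs) = 0) = xs!0 div 2" for xs :: "nat list"
    by (rule Least_equality) (auto split: if_splits)
  from rf_mu[OF A B] show ?thesis unfolding C .
qed

lemma rf_div2_I [rfI]: "rf n f \<Longrightarrow> rf n (\<lambda>xs. f xs div 2)"
  using rf_comp1[OF rf_div2_1] .

lemma rf_if_even_I [rfI]: "rf n a \<Longrightarrow> rf n f \<Longrightarrow> rf n g \<Longrightarrow> rf n (\<lambda>xs. if even (a xs) then f xs else g xs)"
proof -
  assume "rf n a" "rf n f" "rf n g"
  then have "rf n (\<lambda>xs. if a xs \<le> 2 * (a xs div 2) then f xs else g xs)" by (intro rfI)
  moreover have "(a \<le> 2 * (a div 2)) = even a" for a :: nat by presburger
  ultimately show ?thesis by simp
qed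



lemma rf_triangle_I [rfI]: "rf n f \<Longrightarrow> rf n (\<lambda>xs. triangle (f xs))"
  unfolding triangle_def by (intro rfI)

lemma rf_prod_encode_I [rfI]: "rf n f \<Longrightarrow> rf n g \<Longrightarrow> rf n (\<lambda>xs. prod_encode (f xs, g xs))"
  unfolding prod_encode_def by (simp, intro rfI)

lemma le_triangle: "m \<le> triangle m" by (induction m) auto

lemma prod_decode_0 [simp]: "prod_decode 0 = (0, 0)"
  by (simp add: prod_decode_def prod_decode_aux.simps)

definition pd_s :: "nat \<Rightarrow> nat" where "pd_s m = (LEAST s. m < triangle (Suc s))"

lemma triangle_mono: "a \<le> b \<Longrightarrow> triangle a \<le> triangle b"
  by (induction b) (auto simp: le_Suc_eq)

lemma pd_s_eq: "pd_s m = fst (prod_decode m) + snd (prod_decode m)"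
proof -
  obtain x y where xy: "prod_decode m = (x, y)" by (cases "prod_decode m")
  have m: "m = triangle (x + y) + x" using prod_decode_inverse[of m] xy by (simp add: prod_encode_def)
  have "pd_s m = x + y" unfolding pd_s_def
  proof (rule Least_equality)
    show "m < triangle (Suc (x + y))" using m by simp
    fix s assume "m < triangle (Suc s)"
    then show "x + y \<le> s" using m triangle_mono[of "Suc s" "x + y"] by (cases "x + y \<le> s") auto
  qed
  then show ?thesis using xy by simp
qed

lemma fst_pd: "fst (prod_decode m) = m - triangle (pd_s m)"
proof -
  obtain x y where xy: "prod_decode m = (x, y)" by (cases "prod_decode m")
  have m: "m = triangle (x + y) + x" using prod_decode_inverse[of m] xy by (simp add: prod_encode_def)
  show ?thesis using m xy pd_s_eq[of m] by simp
qed

lemma snd_pd: "snd (prod_decode m) = pd_s m - (m - triangle (pd_s m))"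
  using pd_s_eq[of m] fst_pd[of m] by simp

lemma rf_pd_s1: "rf 1 (\<lambda>xs. pd_s (xs!0))"
proof -
  let ?g = "\<lambda>ys. if ys!1 < triangle (Suc (ys!0)) then 0 else (1::nat)"
  have A: "rf (Suc 1) ?g" by (intro rfI | simp)+
  have B: "\<exists>m. ?g (m # xs) = 0" if "length xs = 1" for xs :: "nat list"
  proof (rule exI[of _ "xs!0"])
    have "xs!0 \<le> triangle (xs!0)" using le_triangle by blast
    then show "?g (xs!0 # xs) = 0" by simp
  qed
  have C: "(LEAST m. ?g (m # xs) = 0) = pd_s (xs!0)" for xs :: "nat list"
    unfolding pd_s_def by (rule arg_cong[where f=Least]) (auto split: if_splits)
  from rf_mu[OF A B] show ?thesis unfolding C .
qed

lemma rf_pd_s_I: "rf n f \<Longrightarrow> rf n (\<lambda>xs. pd_s (f xs))"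
  using rf_comp1[OF rf_pd_s1] .

lemma rf_fst_pd_I [rfI]: "rf n f \<Longrightarrow> rf n (\<lambda>xs. fst (prod_decode (f xs)))"
  unfolding fst_pd by (intro rfI rf_pd_s_I)

lemma rf_snd_pd_I [rfI]: "rf n f \<Longrightarrow> rf n (\<lambda>xs. snd (prod_decode (f xs)))"
  unfolding snd_pd by (intro rfI rf_pd_s_I)

definition tlc :: "nat \<Rightarrow> nat" where "tlc c = snd (prod_decode (c - 1))"
lemma rf_tlc_I [rfI]: "rf n f \<Longrightarrow> rf n (\<lambda>xs. tlc (f xs))"
  unfolding tlc_def by (intro rfI)

definition dropc :: "nat \<Rightarrow> nat \<Rightarrow> nat" where "dropc i c = rec_nat c (\<lambda>j y. tlc y) i"
definition nthc :: "nat \<Rightarrow> nat \<Rightarrow> nat" where "nthc i c = fst (prod_decode (dropc i c - 1))"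
definition lenc :: "nat \<Rightarrow> nat" where "lenc c = (LEAST i. dropc i c * (c - i) = 0)"

lemma rf_dropc2: "rf 2 (\<lambda>xs. dropc (xs!0) (xs!1))"
proof -
  have "rf (Suc 1) (\<lambda>xs. rec_nat ((\<lambda>ys. ys!0) (tl xs)) (\<lambda>i y. (\<lambda>ys. tlc (ys!0)) (y # i # tl xs)) (hd xs))"
    by (rule rf_prim) (intro rfI | simp)+
  then show ?thesis by (rule rf_cong') (auto simp: numeral_2_eq_2 length_Suc_conv dropc_def)
qed

lemma rf_dropc_I [rfI]: "rf n f \<Longrightarrow> rf n g \<Longrightarrow> rf n (\<lambda>xs. dropc (f xs) (g xs))"
  using rf_comp2[OF rf_dropc2] .

lemma rf_nthc_I [rfI]: "rf n f \<Longrightarrow> rf n g \<Longrightarrow> rf n (\<lambda>xs. nthc (f xs) (g xs))"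
  unfolding nthc_def by (intro rfI)

lemma rf_lenc1: "rf 1 (\<lambda>xs. lenc (xs!0))"
proof -
  let ?g = "\<lambda>ys. dropc (ys!0) (ys!1) * (ys!1 - ys!0)"
  have A: "rf (Suc 1) ?g" by (intro rfI | simp)+
  have B: "\<exists>m. ?g (m # xs) = 0" if "length xs = 1" for xs :: "nat list"
    by (rule exI[of _ "xs!0"]) simp
  have C: "(LEAST m. ?g (m # xs) = 0) = lenc (xs!0)" for xs :: "nat list"
    unfolding lenc_def by simp
  from rf_mu[OF A B] show ?thesis unfolding C .
qed

lemma rf_lenc_I [rfI]: "rf n f \<Longrightarrow> rf n (\<lambda>xs. lenc (f xs))"
  using rf_comp1[OF rf_lenc1] .

lemma tlc_enc: "tlc (list_encode (x # xs)) = list_encode xs"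
  by (simp add: tlc_def)

lemma dropc_enc: "dropc i (list_encode xs) = list_encode (drop i xs)"
proof (induction i arbitrary: xs)
  case 0 then show ?case by (simp add: dropc_def)
next
  case (Suc i)
  have "dropc (Suc i) (list_encode xs) = tlc (dropc i (list_encode xs))" by (simp add: dropc_def)
  also have "\<dots> = tlc (list_encode (drop i xs))" using Suc by simp
  also have "\<dots> = list_encode (drop (Suc i) xs)"
    by (cases "drop i xs") (auto simp: tlc_def drop_Suc drop_tl tl_drop[symmetric] Cons_nth_drop_Suc
        dest!: arg_cong[where f=tl])
  finally show ?case .
qed

lemma list_encode_zero: "list_encode xs = 0 \<longleftrightarrow> xs = []"
  by (cases xs) auto

lemma length_le_enc: "length xs \<le> list_encode xs"
  by (induction xs) (auto intro: le_trans[OF _ le_prod_encode_2])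

lemma nthc_enc: "i < length xs \<Longrightarrow> nthc i (list_encode xs) = xs ! i"
  by (simp add: nthc_def dropc_enc Cons_nth_drop_Suc[symmetric])

lemma lenc_enc: "lenc (list_encode xs) = length xs"
  unfolding lenc_def
proof (rule Least_equality)
  show "dropc (length xs) (list_encode xs) * (list_encode xs - length xs) = 0"
    by (simp add: dropc_enc)
  fix i assume "dropc i (list_encode xs) * (list_encode xs - i) = 0"
  then show "length xs \<le> i" using length_le_enc[of xs]
    by (auto simp: dropc_enc list_encode_zero)
qed

lemma rf_computes:
  assumes "rf 2 F"
  shows "\<exists>e. \<forall>p out need. (\<forall>n k. F [n, prefix_code p k] = (if need n < k then Suc (out n) else 0))
            \<longrightarrow> comp_fun e p = Some out"
proof -
  obtain e where e: "\<forall>xs. length xs = 2 \<longrightarrow> eval e xs (F xs)" using assms rf_def by auto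
  have ev: "eval e [a, b] (F [a, b])" for a b using e by simp
  show ?thesis
  proof (intro exI[of _ e] allI impI)
    fix p out need assume H: "\<forall>n k. F [n, prefix_code p k] = (if need n < k then Suc (out n) else 0)"
    have c: "computes e p out" unfolding computes_def
    proof
      fix n
      show "\<exists>k. eval e [n, prefix_code p k] (Suc (out n)) \<and> (\<forall>j<k. eval e [n, prefix_code p j] 0)"
      proof (intro exI[of _ "Suc (need n)"] conjI allI impI)
        have "F [n, prefix_code p (Suc (need n))] = Suc (out n)" using H by simp
        then show "eval e [n, prefix_code p (Suc (need n))] (Suc (out n))" using ev by metis
        fix j assume "j < Suc (need n)"
        then have "F [n, prefix_code p j] = 0" using H by simp
        then show "eval e [n, prefix_code p j] 0" using ev by metis
      qed
    qed
    have u: "q = out" if cq: "computes e p q" for q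
    proof
      fix n
      obtain k where "eval e [n, prefix_code p k] (Suc (q n))" using cq unfolding computes_def by blast
      then have "Suc (q n) = F [n, prefix_code p k]" using eval_det ev by blast
      then show "q n = out n" using H by (auto split: if_splits)
    qed
    have "(THE q. computes e p q) = out" using c u by blast
    then show "comp_fun e p = Some out" using c unfolding comp_fun_def by auto
  qed
qed

lemma prefix_len: "lenc (prefix_code p k) = k"
  by (simp add: prefix_code_def lenc_enc)

lemma prefix_nth: "i < k \<Longrightarrow> nthc i (prefix_code p k) = p i"
  by (simp add: prefix_code_def nthc_enc)



lemma rf_computes2:
  assumes "rf 2 (\<lambda>xs. F (xs!0) (xs!1))"
  shows "\<exists>e. \<forall>p out need. (\<forall>n k. F n (prefix_code p k) = (if need n < k then Suc (out n) else 0))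
            \<longrightarrow> comp_fun e p = Some out"
  using rf_computes[OF assms] by simp

lemma comp_id: "\<exists>e. \<forall>p. comp_fun e p = Some p"
proof -
  have "rf 2 (\<lambda>xs. (\<lambda>n c. if n < lenc c then Suc (nthc n c) else 0) (xs!0) (xs!1))"
    by (intro rfI | simp)+
  from rf_computes2[OF this] obtain e where e: "\<And>p out need. (\<forall>n k. (if n < lenc (prefix_code p k) then Suc (nthc n (prefix_code p k)) else 0) = (if need n < k then Suc (out n) else 0))
            \<Longrightarrow> comp_fun e p = Some out" by blast
  show ?thesis
    by (rule exI[of _ e], rule allI, rule e[where need="\<lambda>n. n"]) (simp add: prefix_len prefix_nth)
qed

lemma comp_snd: "\<exists>e. \<forall>p r. comp_fun e (pairB p r) = Some r"
proof -
  have "rf 2 (\<lambda>xs. (\<lambda>n c. if 2 * n + 1 < lenc c then Suc (nthc (2 * n + 1) c) else 0) (xs!0) (xs!1))"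
    by (intro rfI | simp)+
  from rf_computes2[OF this] obtain e where e: "\<And>p out need. (\<forall>n k. (if 2 * n + 1 < lenc (prefix_code p k) then Suc (nthc (2 * n + 1) (prefix_code p k)) else 0) = (if need n < k then Suc (out n) else 0))
            \<Longrightarrow> comp_fun e p = Some out" by blast
  show ?thesis
  proof (rule exI[of _ e], intro allI)
    fix p r
    show "comp_fun e (pairB p r) = Some r"
      by (rule e[where need="\<lambda>n. 2 * n + 1"]) (simp add: prefix_len prefix_nth pairB_def)
  qed
qed

lemma easy_dir: "weihrauch_le delta_A delta_R (P_gt_C_R \<epsilon>) delta_A delta_R PC_R"
proof -
  obtain eK where eK: "\<And>p. comp_fun eK p = Some p" using comp_id by auto
  obtain eH where eH: "\<And>p r. comp_fun eH (pairB p r) = Some r" using comp_snd by auto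
  show ?thesis unfolding weihrauch_le_def
  proof (rule exI[of _ eH], rule exI[of _ eK], intro allI impI)
    fix G assume G: "realizer delta_A delta_R PC_R G"
    show "realizer delta_A delta_R (P_gt_C_R \<epsilon>) (\<lambda>p. case comp_fun eK p of None \<Rightarrow> None
             | Some k \<Rightarrow> (case G k of None \<Rightarrow> None | Some r \<Rightarrow> comp_fun eH (pairB p r)))"
      unfolding realizer_def
    proof (intro allI impI)
      fix p A assume H: "delta_A p = Some A \<and> P_gt_C_R \<epsilon> A \<noteq> {}"
      then have c: "closed A" "emeasure lborel A > ennreal \<epsilon>" "A \<noteq> {}"
        by (auto simp: P_gt_C_R_def split: if_splits)
      then have "emeasure lborel A > ennreal 0" 
        by (metis ennreal_0 leI not_less_zero order_le_less_trans zero_less_iff_neq_zero)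
      then have pc: "PC_R A = A" using c by (simp add: PC_R_def P_gt_C_R_def)
      have pe: "P_gt_C_R \<epsilon> A = A" using c by (simp add: P_gt_C_R_def)
      obtain q y where q: "G p = Some q" "delta_R q = Some y" "y \<in> PC_R A"
        using G H c pc unfolding realizer_def by metis
      then show "\<exists>q y. (case comp_fun eK p of None \<Rightarrow> None
             | Some k \<Rightarrow> (case G k of None \<Rightarrow> None | Some r \<Rightarrow> comp_fun eH (pairB p r))) = Some q \<and>
             delta_R q = Some y \<and> y \<in> P_gt_C_R \<epsilon> A"
        using eK eH pc pe by auto
    qed
  qed
qed



definition Np :: "nat \<Rightarrow> nat" where "Np x = (if even x then x div 2 else 0)"
definition Nm :: "nat \<Rightarrow> nat" where "Nm x = (if even x then 0 else x div 2 + 1)"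
definition intenc :: "nat \<Rightarrow> nat \<Rightarrow> nat" where "intenc P M = (if M \<le> P then 2*(P-M) else 2*(M-P) - 1)"
definition ratcode :: "nat \<Rightarrow> nat \<Rightarrow> nat \<Rightarrow> nat" where "ratcode P M b = prod_encode (intenc P M, b)"
definition mP :: "nat \<Rightarrow> nat" where "mP j = Np (fst (prod_decode j))"
definition mM :: "nat \<Rightarrow> nat" where "mM j = Nm (fst (prod_decode j))"

definition mj :: "nat \<Rightarrow> real" where "mj j = real (mP j) - real (mM j)"
definition sj :: "nat \<Rightarrow> real" where "sj j = 3 * real j - mj j"

lemma int_decode_NpNm: "int_decode x = int (Np x) - int (Nm x)"
  by (auto simp: int_decode_def sum_decode_def Np_def Nm_def)

lemma int_encode_intenc: "int_encode (int P - int M) = intenc P M"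
  by (auto simp: int_encode_def sum_encode_def intenc_def nat_diff_distrib)

lemma rat_dec_NpNm: "rat_dec c = (real (Np (fst (prod_decode c))) - real (Nm (fst (prod_decode c)))) / real (Suc (snd (prod_decode c)))"
proof -
  have "real_of_int (int_decode x) = real (Np x) - real (Nm x)" for x
    unfolding int_decode_NpNm by simp
  then show ?thesis unfolding rat_dec_def by (simp add: case_prod_beta)
qed

lemma rat_dec_ratcode: "rat_dec (ratcode P M b) = (real P - real M) / real (Suc b)"
proof -
  have "int_decode (intenc P M) = int P - int M" using int_encode_intenc[of P M]
    by (metis int_encode_inverse)
  then show ?thesis unfolding rat_dec_def ratcode_def by simp
qed

lemma mj_int: "mj j = real_of_int (int_decode (fst (prod_decode j)))"
  unfolding mj_def mP_def mM_def int_decode_NpNm by simp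

lemma mj_surj: "mj (prod_encode (int_encode m, t)) = real_of_int m"
  unfolding mj_int by simp

definition leftc :: "nat \<Rightarrow> nat \<Rightarrow> nat" where
  "leftc j a = (if Nm (fst (prod_decode a)) + mP j * Suc (snd (prod_decode a)) + 3*j*Suc (snd (prod_decode a))
                  < Np (fst (prod_decode a)) + (3*j + mM j) * Suc (snd (prod_decode a)) + Suc (snd (prod_decode a))
     then ratcode (Np (fst (prod_decode a)) + (3*j + mM j) * Suc (snd (prod_decode a)))
                  (Nm (fst (prod_decode a)) + mP j * Suc (snd (prod_decode a))) (snd (prod_decode a))
     else ratcode (3*j) 1 0)"

definition rightc :: "nat \<Rightarrow> nat \<Rightarrow> nat" where
  "rightc j a = (if Np (fst (prod_decode a)) + (3*j + mM j) * Suc (snd (prod_decode a))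
                  < Nm (fst (prod_decode a)) + mP j * Suc (snd (prod_decode a)) + (3*j+2)*Suc (snd (prod_decode a))
     then ratcode (Np (fst (prod_decode a)) + (3*j + mM j) * Suc (snd (prod_decode a)))
                  (Nm (fst (prod_decode a)) + mP j * Suc (snd (prod_decode a))) (snd (prod_decode a))
     else ratcode (3*j+2) 0 0)"

lemma shift_value:
  "(real (Np a1 + (3*j + mM j) * Suc d) - real (Nm a1 + mP j * Suc d)) / real (Suc d)
   = (real (Np a1) - real (Nm a1)) / real (Suc d) + sj j"
proof -
  have "real (Suc d) > 0" by simp
  then show ?thesis unfolding sj_def mj_def by (simp add: field_simps)
qed

lemma leftc_val: "rat_dec (leftc j a) = max (rat_dec a + sj j) (3 * real j - 1)"
proof -
  define a1 where "a1 = fst (prod_decode a)"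
  define d where "d = snd (prod_decode a)"
  define LP where "LP = Np a1 + (3*j + mM j) * Suc d"
  define LM where "LM = Nm a1 + mP j * Suc d"
  have ra: "rat_dec a + sj j = (real LP - real LM) / real (Suc d)"
    unfolding rat_dec_NpNm LP_def LM_def shift_value a1_def d_def ..
  have D: "real (Suc d) > 0" by simp
  have cond: "(LM + 3*j*Suc d < LP + Suc d) \<longleftrightarrow> (3 * real j - 1 < (real LP - real LM) / real (Suc d))"
  proof -
    have "(LM + 3*j*Suc d < LP + Suc d) \<longleftrightarrow> real LM + 3 * real j * real (Suc d) < real LP + real (Suc d)"
      using of_nat_less_iff[of "LM + 3*j*Suc d" "LP + Suc d", where 'a=real] by (simp add: algebra_simps)
    also have "\<dots> \<longleftrightarrow> (3 * real j - 1) * real (Suc d) < real LP - real LM" by (simp add: algebra_simps)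
    also have "\<dots> \<longleftrightarrow> 3 * real j - 1 < (real LP - real LM) / real (Suc d)" using D by (simp add: pos_less_divide_eq)
    finally show ?thesis .
  qed
  have "leftc j a = (if LM + 3*j*Suc d < LP + Suc d then ratcode LP LM d else ratcode (3*j) 1 0)"
    unfolding leftc_def LP_def LM_def a1_def d_def ..
  then show ?thesis using cond unfolding ra by (auto simp: rat_dec_ratcode)
qed

lemma rightc_val: "rat_dec (rightc j a) = min (rat_dec a + sj j) (3 * real j + 2)"
proof -
  define a1 where "a1 = fst (prod_decode a)"
  define d where "d = snd (prod_decode a)"
  define LP where "LP = Np a1 + (3*j + mM j) * Suc d"
  define LM where "LM = Nm a1 + mP j * Suc d"
  have ra: "rat_dec a + sj j = (real LP - real LM) / real (Suc d)"
    unfolding rat_dec_NpNm LP_def LM_def shift_value a1_def d_def ..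
  have D: "real (Suc d) > 0" by simp
  have cond: "(LP < LM + (3*j+2)*Suc d) \<longleftrightarrow> ((real LP - real LM) / real (Suc d) < 3 * real j + 2)"
  proof -
    have "(LP < LM + (3*j+2)*Suc d) \<longleftrightarrow> real LP < real LM + (3 * real j + 2) * real (Suc d)"
      using of_nat_less_iff[of "LP" "LM + (3*j+2)*Suc d", where 'a=real] by (simp add: algebra_simps)
    also have "\<dots> \<longleftrightarrow> real LP - real LM < (3 * real j + 2) * real (Suc d)" by (simp add: algebra_simps)
    also have "\<dots> \<longleftrightarrow> (real LP - real LM) / real (Suc d) < 3 * real j + 2" using D by (simp add: pos_divide_less_eq)
    finally show ?thesis .
  qed
  have "rightc j a = (if LP < LM + (3*j+2)*Suc d then ratcode LP LM d else ratcode (3*j+2) 0 0)"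
    unfolding rightc_def LP_def LM_def a1_def d_def ..
  then show ?thesis using cond unfolding ra by (auto simp: rat_dec_ratcode)
qed



declare rf_cond_I [rfI]

lemma rf_Np_I [rfI]: "rf n f \<Longrightarrow> rf n (\<lambda>xs. Np (f xs))" unfolding Np_def by (intro rfI)
lemma rf_Nm_I [rfI]: "rf n f \<Longrightarrow> rf n (\<lambda>xs. Nm (f xs))" unfolding Nm_def by (intro rfI)
lemma rf_intenc_I [rfI]: "rf n f \<Longrightarrow> rf n g \<Longrightarrow> rf n (\<lambda>xs. intenc (f xs) (g xs))" unfolding intenc_def by (intro rfI)
lemma rf_ratcode_I [rfI]: "rf n f \<Longrightarrow> rf n g \<Longrightarrow> rf n h \<Longrightarrow> rf n (\<lambda>xs. ratcode (f xs) (g xs) (h xs))"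
  unfolding ratcode_def by (intro rfI)
lemma rf_mP_I [rfI]: "rf n f \<Longrightarrow> rf n (\<lambda>xs. mP (f xs))" unfolding mP_def by (intro rfI)
lemma rf_mM_I [rfI]: "rf n f \<Longrightarrow> rf n (\<lambda>xs. mM (f xs))" unfolding mM_def by (intro rfI)
lemma rf_leftc_I [rfI]: "rf n f \<Longrightarrow> rf n g \<Longrightarrow> rf n (\<lambda>xs. leftc (f xs) (g xs))" unfolding leftc_def by (intro rfI)
lemma rf_rightc_I [rfI]: "rf n f \<Longrightarrow> rf n g \<Longrightarrow> rf n (\<lambda>xs. rightc (f xs) (g xs))" unfolding rightc_def by (intro rfI)

definition jsearch :: "nat \<Rightarrow> nat \<Rightarrow> nat \<Rightarrow> nat" where
  "jsearch A b B = (LEAST j. A < (3*j+2) * Suc b + B)"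

lemma rf_jsearch3: "rf 3 (\<lambda>xs. jsearch (xs!0) (xs!1) (xs!2))"
proof -
  let ?g = "\<lambda>ys. if ys!1 < (3*ys!0+2) * Suc (ys!2) + ys!3 then 0 else (1::nat)"
  have A: "rf (Suc 3) ?g" by (intro rfI | simp)+
  have B: "\<exists>m. ?g (m # xs) = 0" if "length xs = 3" for xs :: "nat list"
  proof (rule exI[of _ "xs!0"])
    have "xs!0 < (3*xs!0+2) * Suc (xs!1) + xs!2"
    proof -
      have "3*xs!0+2 \<le> (3*xs!0+2) * Suc (xs!1)" by simp
      then show ?thesis by linarith
    qed
    then show "?g (xs!0 # xs) = 0" by simp
  qed
  have C: "(LEAST m. ?g (m # xs) = 0) = jsearch (xs!0) (xs!1) (xs!2)" for xs :: "nat list"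
    unfolding jsearch_def by (rule arg_cong[where f=Least]) (auto split: if_splits)
  from rf_mu[OF A B] show ?thesis unfolding C .
qed

lemma rf_jsearch_I [rfI]: "rf n f \<Longrightarrow> rf n g \<Longrightarrow> rf n h \<Longrightarrow> rf n (\<lambda>xs. jsearch (f xs) (g xs) (h xs))"
  using rf_comp3[OF rf_jsearch3] .

definition kfun :: "(nat \<Rightarrow> nat) \<Rightarrow> nat \<Rightarrow> nat" where
"kfun look n = (if fst (prod_decode n) < 1 then Suc (prod_encode (ratcode 0 (Suc (snd (prod_decode n))) 0, ratcode 0 0 0))
  else if fst (prod_decode n) < 2 then Suc (prod_encode (ratcode (3 * snd (prod_decode n) + 1) 0 0, ratcode (3 * snd (prod_decode n) + 3) 0 0))
  else if look (snd (prod_decode (snd (prod_decode n)))) = 0 then 0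
  else Suc (prod_encode (leftc (fst (prod_decode (snd (prod_decode n)))) (fst (prod_decode (look (snd (prod_decode (snd (prod_decode n)))) - 1))),
                         rightc (fst (prod_decode (snd (prod_decode n)))) (snd (prod_decode (look (snd (prod_decode (snd (prod_decode n)))) - 1))))))"

definition hfun :: "(nat \<Rightarrow> nat) \<Rightarrow> nat \<Rightarrow> nat" where
"hfun look n = ratcode (Np (fst (prod_decode (look (2*n+1)))) + mP (jsearch (Np (fst (prod_decode (look 5)))) (snd (prod_decode (look 5))) (Nm (fst (prod_decode (look 5))))) * Suc (snd (prod_decode (look (2*n+1)))))
    (Nm (fst (prod_decode (look (2*n+1)))) + (mM (jsearch (Np (fst (prod_decode (look 5)))) (snd (prod_decode (look 5))) (Nm (fst (prod_decode (look 5)))))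
       + 3 * jsearch (Np (fst (prod_decode (look 5)))) (snd (prod_decode (look 5))) (Nm (fst (prod_decode (look 5))))) * Suc (snd (prod_decode (look (2*n+1)))))
    (snd (prod_decode (look (2*n+1))))"

lemma snd_pd_le: "snd (prod_decode n) \<le> n"
  by (metis le_prod_encode_2 prod_decode_inverse prod.collapse)

lemma compK: "\<exists>e. \<forall>p. comp_fun e p = Some (kfun p)"
proof -
  have "rf 2 (\<lambda>xs. (\<lambda>n c. if n < lenc c then Suc (kfun (\<lambda>i. nthc i c) n) else 0) (xs!0) (xs!1))"
    unfolding kfun_def by (intro rfI) simp_all
  from rf_computes2[OF this] obtain e where e: "\<And>p out need. (\<forall>n k. (if n < lenc (prefix_code p k) then Suc (kfun (\<lambda>i. nthc i (prefix_code p k)) n) else 0) = (if need n < k then Suc (out n) else 0))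
            \<Longrightarrow> comp_fun e p = Some out" by blast
  show ?thesis
  proof (rule exI[of _ e], rule allI, rule e[where need="\<lambda>n. n"], intro allI)
    fix p n k
    show "(if n < lenc (prefix_code p k) then Suc (kfun (\<lambda>i. nthc i (prefix_code p k)) n) else 0) = (if n < k then Suc (kfun p n) else 0)"
    proof (cases "n < k")
      case True
      have "snd (prod_decode (snd (prod_decode n))) < k" using snd_pd_le[of n] snd_pd_le[of "snd (prod_decode n)"] True by linarith
      then show ?thesis using True by (simp add: prefix_len prefix_nth kfun_def)
    qed (simp add: prefix_len)
  qed
qed

lemma compH: "\<exists>e. \<forall>p r. comp_fun e (pairB p r) = Some (hfun (pairB p r))"
proof -
  have "rf 2 (\<lambda>xs. (\<lambda>n c. if 2 * n + 1 < lenc c then if 5 < lenc c then Suc (hfun (\<lambda>i. nthc i c) n) else 0 else 0) (xs!0) (xs!1))"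
    unfolding hfun_def by (intro rfI) simp_all
  from rf_computes2[OF this] obtain e where e: "\<And>p out need. (\<forall>n k. (if 2 * n + 1 < lenc (prefix_code p k) then if 5 < lenc (prefix_code p k) then Suc (hfun (\<lambda>i. nthc i (prefix_code p k)) n) else 0 else 0) = (if need n < k then Suc (out n) else 0))
            \<Longrightarrow> comp_fun e p = Some out" by blast
  show ?thesis
  proof (rule exI[of _ e], intro allI, rule e[where need="\<lambda>n. max (2*n+1) 5"], intro allI)
    fix p r n k
    show "(if 2 * n + 1 < lenc (prefix_code (pairB p r) k) then if 5 < lenc (prefix_code (pairB p r) k) then Suc (hfun (\<lambda>i. nthc i (prefix_code (pairB p r) k)) n) else 0 else 0)
       = (if max (2*n+1) 5 < k then Suc (hfun (pairB p r) n) else 0)"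
      by (auto simp: prefix_len prefix_nth hfun_def max_def)
  qed
qed



definition nameset :: "(nat \<Rightarrow> nat) \<Rightarrow> real set" where
  "nameset p = - (\<Union>n\<in>{n. p n \<noteq> 0}. interval_dec (p n - 1))"

lemma delta_A_nameset: "delta_A p = Some (nameset p)"
  by (simp add: delta_A_def nameset_def)

lemma mem_nameset: "y \<in> nameset p \<longleftrightarrow> (\<forall>n. p n \<noteq> 0 \<longrightarrow> y \<notin> interval_dec (p n - 1))"
  by (auto simp: nameset_def)

lemma interval_dec_alt: "interval_dec k = {rat_dec (fst (prod_decode k)) <..< rat_dec (snd (prod_decode k))}"
  by (simp add: interval_dec_def case_prod_beta)

lemma kfun0:
  assumes "fst (prod_decode n) = 0"
  shows "kfun p n \<noteq> 0 \<and> interval_dec (kfun p n - 1) = {-(real (snd (prod_decode n)) + 1) <..< 0}"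
  using assms by (simp add: kfun_def interval_dec_alt rat_dec_ratcode algebra_simps)

lemma kfun1:
  assumes "fst (prod_decode n) = 1"
  shows "kfun p n \<noteq> 0 \<and> interval_dec (kfun p n - 1) = {3 * real (snd (prod_decode n)) + 1 <..< 3 * real (snd (prod_decode n)) + 3}"
  using assms by (simp add: kfun_def interval_dec_alt rat_dec_ratcode algebra_simps)

lemma kfun2:
  assumes "fst (prod_decode n) \<ge> 2" "i = snd (prod_decode n)" "j = fst (prod_decode i)" "l = snd (prod_decode i)"
  shows "(kfun p n \<noteq> 0 \<longleftrightarrow> p l \<noteq> 0) \<and> (p l \<noteq> 0 \<longrightarrow> interval_dec (kfun p n - 1) =
     {max (rat_dec (fst (prod_decode (p l - 1))) + sj j) (3 * real j - 1) <..< min (rat_dec (snd (prod_decode (p l - 1))) + sj j) (3 * real j + 2)})"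
  using assms by (simp add: kfun_def interval_dec_alt leftc_val rightc_val)

lemma nat_lt_real: "real a < real b \<Longrightarrow> a < b" by simp

lemma soundness:
  assumes "y \<in> nameset (kfun p)"
  shows "\<exists>j. 3 * real j \<le> y \<and> y \<le> 3 * real j + 1 \<and> y - sj j \<in> nameset p"
proof -
  have y: "\<And>n. kfun p n \<noteq> 0 \<Longrightarrow> y \<notin> interval_dec (kfun p n - 1)" using assms mem_nameset by blast
  have y0: "y \<ge> 0"
  proof (rule ccontr)
    assume "\<not> y \<ge> 0"
    define i where "i = nat \<lceil>-y\<rceil>"
    have "-(real i + 1) < y" unfolding i_def by linarith
    moreover have "fst (prod_decode (prod_encode (0, i))) = 0" by simp
    from kfun0[OF this, of p] y[of "prod_encode (0, i)"] calculation \<open>\<not> y \<ge> 0\<close> show False by simp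
  qed
  define j where "j = nat \<lfloor>y / 3\<rfloor>"
  have j1: "3 * real j \<le> y" unfolding j_def using y0 by linarith
  have j2: "y < 3 * real j + 3" unfolding j_def using y0 by linarith
  have j3: "y \<le> 3 * real j + 1"
  proof (rule ccontr)
    assume "\<not> y \<le> 3 * real j + 1"
    have "fst (prod_decode (prod_encode (1, j))) = 1" by simp
    from kfun1[OF this, of p] y[of "prod_encode (1, j)"] j2 \<open>\<not> y \<le> 3 * real j + 1\<close> show False by simp
  qed
  have "y - sj j \<in> nameset p"
    unfolding mem_nameset
  proof (intro allI impI)
    fix l assume pl: "p l \<noteq> 0"
    show "y - sj j \<notin> interval_dec (p l - 1)"
    proof
      assume yin: "y - sj j \<in> interval_dec (p l - 1)"
      define n where "n = prod_encode (2, prod_encode (j, l))"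
      have "fst (prod_decode n) \<ge> 2" unfolding n_def by simp
      from kfun2[OF this refl refl refl, of p] pl
      have "kfun p n \<noteq> 0" "interval_dec (kfun p n - 1) =
     {max (rat_dec (fst (prod_decode (p l - 1))) + sj j) (3 * real j - 1) <..< min (rat_dec (snd (prod_decode (p l - 1))) + sj j) (3 * real j + 2)}"
        unfolding n_def by auto
      moreover have "y \<in> interval_dec (kfun p n - 1)"
        unfolding calculation(2) using yin j1 j3 unfolding interval_dec_alt by auto
      ultimately show False using y by blast
    qed
  qed
  then show ?thesis using j1 j3 by blast
qed

lemma completeness:
  assumes "x \<in> nameset p" "mj j \<le> x" "x \<le> mj j + 1"
  shows "x + sj j \<in> nameset (kfun p)"
  unfolding mem_nameset
proof (intro allI impI)
  fix n assume kn: "kfun p n \<noteq> 0"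
  let ?y = "x + sj j"
  have y1: "3 * real j \<le> ?y" "?y \<le> 3 * real j + 1" using assms(2,3) by (auto simp: sj_def)
  show "?y \<notin> interval_dec (kfun p n - 1)"
  proof (cases "fst (prod_decode n) = 0")
    case True then show ?thesis using kfun0[OF True, of p] y1 by auto
  next
    case F0: False
    show ?thesis
    proof (cases "fst (prod_decode n) = 1")
      case True
      define i where "i = snd (prod_decode n)"
      show ?thesis
      proof
        assume "?y \<in> interval_dec (kfun p n - 1)"
        then have "3 * real i + 1 < ?y" "?y < 3 * real i + 3" using kfun1[OF True, of p] unfolding i_def by auto
        then have "real (3 * i) < real (3 * j)" "real (3 * j) < real (3 * i + 3)" using y1 by auto
        then have "3 * i < 3 * j" "3 * j < 3 * i + 3" by (metis of_nat_less_iff)+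
        then show False by presburger
      qed
    next
      case False
      then have ge: "fst (prod_decode n) \<ge> 2" using F0 by linarith
      define i where "i = snd (prod_decode n)"
      define j' where "j' = fst (prod_decode i)"
      define l where "l = snd (prod_decode i)"
      note K = kfun2[OF ge i_def j'_def l_def, of p]
      have pl: "p l \<noteq> 0" using K kn by blast
      show ?thesis
      proof
        assume "?y \<in> interval_dec (kfun p n - 1)"
        then have yy: "rat_dec (fst (prod_decode (p l - 1))) + sj j' < ?y" "3 * real j' - 1 < ?y"
          "?y < rat_dec (snd (prod_decode (p l - 1))) + sj j'" "?y < 3 * real j' + 2"
          using K pl by auto
        have "real (3 * j') < real (3 * j + 2)" "real (3 * j) < real (3 * j' + 2)" using yy y1 by auto
        then have "3 * j' < 3 * j + 2" "3 * j < 3 * j' + 2" by (metis of_nat_less_iff)+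
        then have "j' = j" by linarith
        then have "x \<in> interval_dec (p l - 1)" using yy unfolding interval_dec_alt by auto
        then show False using assms(1) pl mem_nameset by blast
      qed
    qed
  qed
qed



lemma cauchy_unique:
  fixes x x' :: real
  assumes "\<forall>n. \<bar>q n - x\<bar> \<le> (1/2)^n" "\<forall>n. \<bar>q n - x'\<bar> \<le> (1/2)^n"
  shows "x = x'"
proof (rule ccontr)
  assume "x \<noteq> x'"
  then have "\<bar>x - x'\<bar> / 2 > 0" by simp
  from real_arch_pow_inv[OF this, of "1/2"] obtain n where n: "(1/2::real)^n < \<bar>x - x'\<bar> / 2" by auto
  have "\<bar>x - x'\<bar> \<le> \<bar>q n - x\<bar> + \<bar>q n - x'\<bar>" by linarith
  also have "\<dots> \<le> 2 * (1/2)^n" using assms by (smt (verit))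
  finally have "\<bar>x - x'\<bar> \<le> 2 * (1/2)^n" .
  moreover have "2 * (1/2::real)^n < \<bar>x - x'\<bar>" using mult_strict_left_mono[OF n, of 2] by simp
  ultimately show False by linarith
qed

lemma delta_R_iff: "delta_R q = Some x \<longleftrightarrow> (\<forall>n. \<bar>rat_dec (q n) - x\<bar> \<le> (1/2)^n)"
proof
  assume h: "delta_R q = Some x"
  then have ex: "\<exists>x. \<forall>n. \<bar>rat_dec (q n) - x\<bar> \<le> (1/2)^n" unfolding delta_R_def by (auto split: if_splits)
  then obtain x0 where x0: "\<forall>n. \<bar>rat_dec (q n) - x0\<bar> \<le> (1/2)^n" by blast
  have "(THE x. \<forall>n. \<bar>rat_dec (q n) - x\<bar> \<le> (1/2)^n) = x0"
    by (rule the_equality) (use x0 cauchy_unique[of "\<lambda>n. rat_dec (q n)"] in blast)+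
  then show "\<forall>n. \<bar>rat_dec (q n) - x\<bar> \<le> (1/2)^n" using h ex x0 unfolding delta_R_def by auto
next
  assume h: "\<forall>n. \<bar>rat_dec (q n) - x\<bar> \<le> (1/2)^n"
  have "(THE x. \<forall>n. \<bar>rat_dec (q n) - x\<bar> \<le> (1/2)^n) = x"
    by (rule the_equality) (use h cauchy_unique[of "\<lambda>n. rat_dec (q n)"] in blast)+
  then show "delta_R q = Some x" using h unfolding delta_R_def by auto
qed

lemma jsearch_val:
  assumes "\<bar>rat_dec c - y\<bar> \<le> 1/4" "3 * real j \<le> y" "y \<le> 3 * real j + 1"
  shows "jsearch (Np (fst (prod_decode c))) (snd (prod_decode c)) (Nm (fst (prod_decode c))) = j"
proof -
  define a where "a = fst (prod_decode c)"
  define b where "b = snd (prod_decode c)"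
  have rc: "rat_dec c = (real (Np a) - real (Nm a)) / real (Suc b)" unfolding rat_dec_NpNm a_def b_def ..
  have D: "real (Suc b) > 0" by simp
  have iff: "Np a < (3*j'+2) * Suc b + Nm a \<longleftrightarrow> rat_dec c < 3 * real j' + 2" for j'
  proof -
    have "Np a < (3*j'+2) * Suc b + Nm a \<longleftrightarrow> real (Np a) < (3 * real j' + 2) * real (Suc b) + real (Nm a)"
      using of_nat_less_iff[of "Np a" "(3*j'+2) * Suc b + Nm a", where 'a=real] by (simp add: algebra_simps)
    also have "\<dots> \<longleftrightarrow> real (Np a) - real (Nm a) < (3 * real j' + 2) * real (Suc b)" by linarith
    also have "\<dots> \<longleftrightarrow> rat_dec c < 3 * real j' + 2" unfolding rc using D by (simp add: pos_divide_less_eq)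
    finally show ?thesis .
  qed
  show ?thesis unfolding a_def[symmetric] b_def[symmetric] jsearch_def
  proof (rule Least_equality)
    show "Np a < (3 * j + 2) * Suc b + Nm a" unfolding iff using assms by linarith
    fix j' assume "Np a < (3 * j' + 2) * Suc b + Nm a"
    then have "rat_dec c < 3 * real j' + 2" unfolding iff .
    moreover have "y - 1/4 \<le> rat_dec c" using assms(1) unfolding abs_le_iff by linarith
    ultimately have "real (3 * j) < real (3 * j' + 3)" using assms(2) by simp
    then have "3 * j < 3 * j' + 3" by (metis of_nat_less_iff)
    then show "j \<le> j'" by linarith
  qed
qed

lemma hfun_val:
  assumes "delta_R r = Some y" "3 * real j \<le> y" "y \<le> 3 * real j + 1"
  shows "delta_R (hfun (pairB p r)) = Some (y - sj j)"
proof -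
  have r: "\<forall>n. \<bar>rat_dec (r n) - y\<bar> \<le> (1/2)^n" using assms(1) delta_R_iff by blast
  have p5: "pairB p r 5 = r 2" and podd: "pairB p r (2*n+1) = r n" for n by (simp_all add: pairB_def)
  have r2: "\<bar>rat_dec (r 2) - y\<bar> \<le> 1/4" using r[rule_format, of 2] by (simp add: power2_eq_square)
  note J = jsearch_val[OF r2 assms(2,3)]
  have val: "rat_dec (hfun (pairB p r) n) = rat_dec (r n) - sj j" for n
  proof -
    define a where "a = fst (prod_decode (r n))"
    define b where "b = snd (prod_decode (r n))"
    have "hfun (pairB p r) n = ratcode (Np a + mP j * Suc b) (Nm a + (mM j + 3 * j) * Suc b) b"
      unfolding hfun_def p5 podd J a_def b_def ..
    then have "rat_dec (hfun (pairB p r) n) = (real (Np a + mP j * Suc b) - real (Nm a + (mM j + 3 * j) * Suc b)) / real (Suc b)"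
      by (simp add: rat_dec_ratcode)
    also have "\<dots> = (real (Np a) - real (Nm a)) / real (Suc b) - sj j"
    proof -
      have "real (Suc b) > 0" by simp
      then show ?thesis unfolding sj_def mj_def by (simp add: field_simps)
    qed
    also have "\<dots> = rat_dec (r n) - sj j" unfolding rat_dec_NpNm a_def b_def ..
    finally show ?thesis .
  qed
  show ?thesis unfolding delta_R_iff val using r by simp
qed

lemma trans_meas:
  fixes C :: "real set"
  assumes "C \<in> sets borel"
  shows "(\<lambda>y. y - s) -` C \<in> sets borel" "emeasure lborel ((\<lambda>y. y - s) -` C) = emeasure lborel C"
proof -
  have m: "(\<lambda>y::real. y - s) \<in> borel_measurable borel" by simp
  show b: "(\<lambda>y. y - s) -` C \<in> sets borel" using measurable_sets_borel[OF m assms] by simp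
  have "emeasure lborel ((\<lambda>y. y - s) -` C) = emeasure (distr lborel borel ((+) s)) ((\<lambda>y. y - s) -` C)"
    by (simp add: lborel_distr_plus)
  also have "\<dots> = emeasure lborel ((+) s -` ((\<lambda>y. y - s) -` C) \<inter> space lborel)"
    by (rule emeasure_distr) (use b in simp_all)
  also have "(+) s -` ((\<lambda>y. y - s) -` C) \<inter> space lborel = C" by auto
  finally show "emeasure lborel ((\<lambda>y. y - s) -` C) = emeasure lborel C" .
qed



lemma closed_nameset: "closed (nameset p)"
  unfolding nameset_def by (intro closed_Compl open_UN ballI) (simp add: interval_dec_alt)

lemma pos_piece:
  fixes A :: "real set"
  assumes "closed A" "emeasure lborel A > 0"
  shows "\<exists>m::int. emeasure lborel (A \<inter> {real_of_int m .. real_of_int m + 1}) > 0"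
proof (rule ccontr)
  assume "\<not> ?thesis"
  then have z: "emeasure lborel (A \<inter> {real_of_int m .. real_of_int m + 1}) = 0" for m by (simp add: not_gr_zero)
  define N where "N k = A \<inter> {real_of_int (int_decode k) .. real_of_int (int_decode k) + 1}" for k
  have e0: "emeasure lborel (\<Union>k. N k) = 0"
    by (rule emeasure_UN_eq_0) (use z assms(1) in \<open>auto simp: N_def intro!: borel_closed\<close>)
  have sub: "A \<subseteq> (\<Union>k. N k)"
  proof
    fix x assume "x \<in> A"
    then have "x \<in> N (int_encode \<lfloor>x\<rfloor>)" unfolding N_def by simp
    then show "x \<in> (\<Union>k. N k)" by blast
  qed
  have "range N \<subseteq> sets lborel" using assms(1) by (auto simp: N_def intro!: borel_closed)
  then have "(\<Union>k. N k) \<in> sets lborel" by (rule sets.countable_UN)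
  then have "emeasure lborel A \<le> emeasure lborel (\<Union>k. N k)"
    using sub by (intro emeasure_mono)
  then show False using assms(2) e0 by simp
qed

lemma exists_mult_gt:
  fixes c :: ennreal
  assumes "c > 0"
  shows "\<exists>T::nat. of_nat T * c > ennreal \<epsilon>"
proof (cases c rule: ennreal_cases)
  case (real r)
  then have r: "r > 0" using assms by simp
  define T where "T = nat \<lceil>\<epsilon> / r\<rceil> + 1"
  have "\<epsilon> / r < real T" unfolding T_def by linarith
  then have "\<epsilon> < real T * r" using r by (simp add: divide_less_eq)
  then have "ennreal \<epsilon> < ennreal (real T * r)"
    using r \<open>\<epsilon> < real T * r\<close> by (intro ennreal_lessI) (auto simp: T_def)
  also have "ennreal (real T * r) = of_nat T * c" using real r
    by (simp add: ennreal_mult ennreal_of_nat_eq_real_of_nat)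
  finally show ?thesis by blast
next
  case top
  then show ?thesis by (intro exI[of _ 1]) simp
qed

lemma measure_big:
  assumes "emeasure lborel (nameset p) > 0"
  shows "emeasure lborel (nameset (kfun p)) > ennreal \<epsilon>"
proof -
  let ?A = "nameset p"
  obtain m :: int where m: "emeasure lborel (?A \<inter> {real_of_int m .. real_of_int m + 1}) > 0"
    using pos_piece[OF closed_nameset assms] by blast
  define C where "C = ?A \<inter> {real_of_int m .. real_of_int m + 1}"
  have Cb: "C \<in> sets borel" unfolding C_def by (intro borel_closed closed_Int closed_nameset) simp
  define j where "j t = prod_encode (int_encode m, t)" for t
  have mjj: "mj (j t) = real_of_int m" for t unfolding j_def by (rule mj_surj)
  define D where "D t = (\<lambda>y. y - sj (j t)) -` C" for t
  have Db: "D t \<in> sets borel" for t unfolding D_def using trans_meas(1)[OF Cb] .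
  have Dm: "emeasure lborel (D t) = emeasure lborel C" for t unfolding D_def using trans_meas(2)[OF Cb] .
  have Dsub: "D t \<subseteq> nameset (kfun p)" for t
  proof
    fix y assume "y \<in> D t"
    then have "y - sj (j t) \<in> C" unfolding D_def by simp
    then have "y - sj (j t) + sj (j t) \<in> nameset (kfun p)"
      by (intro completeness) (auto simp: C_def mjj)
    then show "y \<in> nameset (kfun p)" by simp
  qed
  have Dint: "y \<in> D t \<Longrightarrow> 3 * real (j t) \<le> y \<and> y \<le> 3 * real (j t) + 1" for y t
    unfolding D_def C_def sj_def mjj by auto
  have disj: "disjoint_family_on D {..<T}" for T
    unfolding disjoint_family_on_def
  proof (intro ballI impI)
    fix t t' :: nat assume "t \<noteq> t'"
    then have jne: "j t \<noteq> j t'" unfolding j_def by simp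
    show "D t \<inter> D t' = {}"
    proof (rule ccontr)
      assume "D t \<inter> D t' \<noteq> {}"
      then obtain y where "y \<in> D t" "y \<in> D t'" by blast
      then have "real (3 * j t) < real (3 * j t' + 2)" "real (3 * j t') < real (3 * j t + 2)"
        using Dint[OF \<open>y \<in> D t\<close>] Dint[OF \<open>y \<in> D t'\<close>] by auto
      then have "3 * j t < 3 * j t' + 2" "3 * j t' < 3 * j t + 2" by (metis of_nat_less_iff)+
      then show False using jne by linarith
    qed
  qed
  obtain T :: nat where T: "of_nat T * emeasure lborel C > ennreal \<epsilon>"
    using exists_mult_gt[of "emeasure lborel C" \<epsilon>] m unfolding C_def by blast
  have "of_nat T * emeasure lborel C = (\<Sum>t\<in>{..<T}. emeasure lborel (D t))" by (simp add: Dm)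
  also have "\<dots> = emeasure lborel (\<Union>t\<in>{..<T}. D t)"
    by (rule sum_emeasure) (use Db disj in auto)
  also have "\<dots> \<le> emeasure lborel (nameset (kfun p))"
    by (rule emeasure_mono) (use Dsub closed_nameset in \<open>auto intro: borel_closed\<close>)
  finally show ?thesis using T by simp
qed

lemma hard_dir:
  assumes "\<epsilon> \<ge> 0"
  shows "weihrauch_le delta_A delta_R PC_R delta_A delta_R (P_gt_C_R \<epsilon>)"
proof -
  obtain eK where eK: "\<And>p. comp_fun eK p = Some (kfun p)" using compK by auto
  obtain eH where eH: "\<And>p r. comp_fun eH (pairB p r) = Some (hfun (pairB p r))" using compH by auto
  show ?thesis unfolding weihrauch_le_def
  proof (rule exI[of _ eH], rule exI[of _ eK], intro allI impI)
    fix G assume G: "realizer delta_A delta_R (P_gt_C_R \<epsilon>) G"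
    show "realizer delta_A delta_R PC_R (\<lambda>p. case comp_fun eK p of None \<Rightarrow> None
             | Some k \<Rightarrow> (case G k of None \<Rightarrow> None | Some r \<Rightarrow> comp_fun eH (pairB p r)))"
      unfolding realizer_def
    proof (intro allI impI)
      fix p A assume H: "delta_A p = Some A \<and> PC_R A \<noteq> {}"
      then have A: "A = nameset p" by (simp add: delta_A_nameset)
      have pos: "emeasure lborel A > 0" using H by (auto simp: PC_R_def P_gt_C_R_def split: if_splits)
      then have pc: "PC_R A = A" using closed_nameset A by (simp add: PC_R_def P_gt_C_R_def)
      let ?B = "nameset (kfun p)"
      have Bm: "emeasure lborel ?B > ennreal \<epsilon>" using measure_big pos A by blast
      then have "?B \<noteq> {}" by (metis emeasure_empty not_less_zero)
      then have pB: "P_gt_C_R \<epsilon> ?B = ?B" "P_gt_C_R \<epsilon> ?B \<noteq> {}" using Bm closed_nameset by (simp_all add: P_gt_C_R_def)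
      obtain r y where r: "G (kfun p) = Some r" "delta_R r = Some y" "y \<in> P_gt_C_R \<epsilon> ?B"
        using G pB delta_A_nameset[of "kfun p"] unfolding realizer_def by metis
      then have "y \<in> ?B" using pB by simp
      then obtain j where j: "3 * real j \<le> y" "y \<le> 3 * real j + 1" "y - sj j \<in> nameset p"
        using soundness by blast
      have hv: "delta_R (hfun (pairB p r)) = Some (y - sj j)" using hfun_val[OF r(2) j(1,2)] .
      show "\<exists>q y. (case comp_fun eK p of None \<Rightarrow> None
             | Some k \<Rightarrow> (case G k of None \<Rightarrow> None | Some r \<Rightarrow> comp_fun eH (pairB p r))) = Some q \<and>
             delta_R q = Some y \<and> y \<in> PC_R A"
        using eK eH r(1) hv j(3) pc A by auto
    qed
  qed
qed

theorem theorem11p5: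
  fixes \<epsilon> :: real
  assumes "\<epsilon> \<ge> 0"
  shows "weihrauch_eq delta_A delta_R PC_R delta_A delta_R (P_gt_C_R \<epsilon>)"
  unfolding weihrauch_eq_def using hard_dir[OF assms] easy_dir by blast

end
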